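(* Let $k\ge 1$ and let $G$ be a graph obtained as a $k$-clique-sum of graphs $G_1$ and $G_2$, with common clique $K=\{v_1,\dots,v_k\}$. For $i=1,2$ let $G_i'=G_i\cap G$ (the subgraph of $G$ with vertex set $V(G_i)$ and edge set $E(G_i)\cap E(G)$). Let $\ell$ be an integer. Suppose that $G_1'$ has an AT-orientation $D_1'$ with $\Delta^+(D_1')\le \ell$, and that $G_2$ has an AT-orientation $D_2$ with $\Delta^+(D_2)\le\ell$ and $d^+_{D_2}(v_i)=i-1$ for $i=1,\dots,k$. Then $G$ has an AT-orientation $D$ such that $\Delta^+(D)\le\ell$ and $d_D^+(v)=d_{D_1'}^+(v)$ for every $v\in V(G_1)$.
   Context: All graphs are finite, simple and undirected. A clique of a graph is a nonempty vertex subset inducing a complete subgraph. Given vertex-disjoint graphs $G_1,G_2$, cliques $X_i\subset V(G_i)$ with $|X_1|=|X_2|=k$, and a bijection $f:X_1\to X_2$, a $k$-clique-sum of $G_1$ and $G_2$ is any graph obtained from $G_1\cup G_2$ by identifying $x$ with $f(x)$ for every $x\in X_1$ and then possibly deleting some edges of the resulting common clique. For an orientation $D$ of a graph, $d_D^+(v)$ is the out-degree of $v$ and $\Delta^+(D)$ the maximum out-degree. An Eulerian subdigraph of $D$ is a spanning subdigraph $H$ with $d_H^+(v)=d_H^-(v)$ for all vertices $v$ (including the one with no arcs); $EE(D)$ (resp. $OE(D)$) is the set of Eulerian subdigraphs with an even (resp. odd) number of arcs. An orientation $D$ is an AT-orientation if $|EE(D)|\ne|OE(D)|$. *)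

theory Defs
  imports Main
begin

definition simple_graph :: "'a set \<Rightarrow> 'a set set \<Rightarrow> bool" where
  "simple_graph V E \<longleftrightarrow> finite V \<and>
     (\<forall>e\<in>E. \<exists>x y. x \<noteq> y \<and> x \<in> V \<and> y \<in> V \<and> e = {x, y})"

definition is_clique :: "'a set \<Rightarrow> 'a set set \<Rightarrow> 'a set \<Rightarrow> bool" where
  "is_clique V E X \<longleftrightarrow> X \<noteq> {} \<and> X \<subseteq> V \<and>
     (\<forall>x\<in>X. \<forall>y\<in>X. x \<noteq> y \<longrightarrow> {x, y} \<in> E)"

definition is_orientation :: "'a set \<Rightarrow> 'a set set \<Rightarrow> ('a \<times> 'a) set \<Rightarrow> bool" where
  "is_orientation V E D \<longleftrightarrow>
     (\<forall>(x, y)\<in>D. x \<in> V \<and> y \<in> V \<and> {x, y} \<in> E) \<and>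
     (\<forall>x y. {x, y} \<in> E \<longrightarrow> ((x, y) \<in> D \<longleftrightarrow> (y, x) \<notin> D))"

definition outdeg :: "('a \<times> 'a) set \<Rightarrow> 'a \<Rightarrow> nat" where
  "outdeg D v = card {w. (v, w) \<in> D}"

definition indeg :: "('a \<times> 'a) set \<Rightarrow> 'a \<Rightarrow> nat" where
  "indeg D v = card {w. (w, v) \<in> D}"

definition eulerian_sub :: "'a set \<Rightarrow> ('a \<times> 'a) set \<Rightarrow> ('a \<times> 'a) set \<Rightarrow> bool" where
  "eulerian_sub V D H \<longleftrightarrow> H \<subseteq> D \<and> (\<forall>v\<in>V. outdeg H v = indeg H v)"

definition EE :: "'a set \<Rightarrow> ('a \<times> 'a) set \<Rightarrow> ('a \<times> 'a) set set" where
  "EE V D = {H. eulerian_sub V D H \<and> even (card H)}"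

definition OE :: "'a set \<Rightarrow> ('a \<times> 'a) set \<Rightarrow> ('a \<times> 'a) set set" where
  "OE V D = {H. eulerian_sub V D H \<and> odd (card H)}"

definition AT_orientation :: "'a set \<Rightarrow> 'a set set \<Rightarrow> ('a \<times> 'a) set \<Rightarrow> bool" where
  "AT_orientation V E D \<longleftrightarrow> is_orientation V E D \<and> card (EE V D) \<noteq> card (OE V D)"

definition max_outdeg_le :: "'a set \<Rightarrow> ('a \<times> 'a) set \<Rightarrow> int \<Rightarrow> bool" where
  "max_outdeg_le V D l \<longleftrightarrow> (\<forall>v\<in>V. int (outdeg D v) \<le> l)"

text \<open>G = (V1 \<union> V2, E) is a k-clique-sum of (V1,E1) and (V2,E2) along the common clique K
  (the identification is modelled by letting the two vertex sets intersect exactly in K).\<close>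
definition clique_sum :: "nat \<Rightarrow> 'a set \<Rightarrow> 'a set set \<Rightarrow> 'a set \<Rightarrow> 'a set set \<Rightarrow> 'a set \<Rightarrow> 'a set set \<Rightarrow> bool" where
  "clique_sum k V1 E1 V2 E2 K E \<longleftrightarrow>
     simple_graph V1 E1 \<and> simple_graph V2 E2 \<and>
     V1 \<inter> V2 = K \<and> card K = k \<and> is_clique V1 E1 K \<and> is_clique V2 E2 K \<and>
     E \<subseteq> E1 \<union> E2 \<and> (\<forall>e \<in> E1 \<union> E2. \<not> e \<subseteq> K \<longrightarrow> e \<in> E)"

end

theory Submission
  imports Defs
begin


lemma outdeg_pairs: "outdeg H v = card {p\<in>H. fst p = v}"
proof -
  have "{p\<in>H. fst p = v} = Pair v ` {w. (v,w)\<in>H}" by force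
  moreover have "inj_on (Pair v) {w. (v,w)\<in>H}" by (auto simp: inj_on_def)
  ultimately show ?thesis unfolding outdeg_def by (simp add: card_image)
qed

lemma indeg_pairs: "indeg H v = card {p\<in>H. snd p = v}"
proof -
  have "{p\<in>H. snd p = v} = (\<lambda>w. (w,v)) ` {w. (w,v)\<in>H}" by force
  moreover have "inj_on (\<lambda>w. (w,v)) {w. (w,v)\<in>H}" by (auto simp: inj_on_def)
  ultimately show ?thesis unfolding indeg_def by (simp add: card_image)
qed

lemma sum_outdeg: assumes "finite H" "finite S"
  shows "(\<Sum>v\<in>S. outdeg H v) = card {p\<in>H. fst p\<in>S}"
proof -
  have "{p\<in>H. fst p\<in>S} = (\<Union>v\<in>S. {p\<in>H. fst p = v})" by auto
  moreover have "card (\<Union>v\<in>S. {p\<in>H. fst p = v}) = (\<Sum>v\<in>S. card {p\<in>H. fst p = v})"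
    by (rule card_UN_disjoint) (use assms in auto)
  ultimately show ?thesis by (simp add: outdeg_pairs)
qed

lemma sum_indeg: assumes "finite H" "finite S"
  shows "(\<Sum>v\<in>S. indeg H v) = card {p\<in>H. snd p\<in>S}"
proof -
  have "{p\<in>H. snd p\<in>S} = (\<Union>v\<in>S. {p\<in>H. snd p = v})" by auto
  moreover have "card (\<Union>v\<in>S. {p\<in>H. snd p = v}) = (\<Sum>v\<in>S. card {p\<in>H. snd p = v})"
    by (rule card_UN_disjoint) (use assms in auto)
  ultimately show ?thesis by (simp add: indeg_pairs)
qed

lemma cut_closed:
  assumes "finite H" "finite S" "\<forall>v\<in>S. outdeg H v = indeg H v"
    and "\<forall>p\<in>H. fst p \<in> S \<longrightarrow> snd p \<in> S"
  shows "\<forall>p\<in>H. snd p \<in> S \<longrightarrow> fst p \<in> S"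
proof -
  have "(\<Sum>v\<in>S. outdeg H v) = (\<Sum>v\<in>S. indeg H v)" using assms(3) by simp
  hence e: "card {p\<in>H. fst p\<in>S} = card {p\<in>H. snd p\<in>S}"
    using sum_outdeg[OF assms(1,2)] sum_indeg[OF assms(1,2)] by simp
  have s: "{p\<in>H. fst p\<in>S} \<subseteq> {p\<in>H. snd p\<in>S}" using assms(4) by auto
  have f: "finite {p\<in>H. snd p\<in>S}" using assms(1) by simp
  have "{p\<in>H. fst p\<in>S} = {p\<in>H. snd p\<in>S}" by (rule card_subset_eq[OF f s e])
  thus ?thesis by blast
qed

definition Eul :: "'a set \<Rightarrow> ('a \<times> 'a) set \<Rightarrow> ('a \<times> 'a) set set" where
  "Eul V D = {H. eulerian_sub V D H}"

definition sig :: "'a set \<Rightarrow> ('a \<times> 'a) set \<Rightarrow> int" where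
  "sig V D = (\<Sum>H\<in>Eul V D. (-1) ^ card H)"

lemma finite_Eul: "finite D \<Longrightarrow> finite (Eul V D)"
  unfolding Eul_def eulerian_sub_def
  by (rule finite_subset[of _ "Pow D"]) auto

lemma sig_card: assumes "finite D"
  shows "sig V D = int (card (EE V D)) - int (card (OE V D))"
proof -
  have u: "Eul V D = EE V D \<union> OE V D" and d: "EE V D \<inter> OE V D = {}"
    unfolding Eul_def EE_def OE_def by auto
  have f: "finite (EE V D)" "finite (OE V D)" using finite_Eul[OF assms, of V] u by auto
  have "sig V D = (\<Sum>H\<in>EE V D. (-1) ^ card H) + (\<Sum>H\<in>OE V D. (-1) ^ card H)"
    unfolding sig_def u by (rule sum.union_disjoint[OF f d])
  also have "(\<Sum>H\<in>EE V D. (-1::int) ^ card H) = (\<Sum>H\<in>EE V D. 1)"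
    by (rule sum.cong) (auto simp: EE_def)
  also have "(\<Sum>H\<in>OE V D. (-1::int) ^ card H) = (\<Sum>H\<in>OE V D. -1)"
    by (rule sum.cong) (auto simp: OE_def)
  finally show ?thesis by simp
qed

lemma bal_outside:
  assumes "\<forall>p\<in>H. fst p \<in> V \<and> snd p \<in> V" "\<forall>v\<in>V. outdeg H v = indeg H v"
  shows "outdeg H u = indeg H u"
proof (cases "u \<in> V")
  case False
  hence "{w. (u,w)\<in>H} = {}" "{w. (w,u)\<in>H} = {}" using assms(1) by auto
  thus ?thesis unfolding outdeg_def indeg_def by simp
qed (use assms in auto)

lemma finite_out: assumes "finite A" shows "finite {w. (u,w)\<in>A}"
proof -
  have "{w. (u,w)\<in>A} \<subseteq> snd ` A" by force
  thus ?thesis using finite_subset finite_imageI[OF assms] by blast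
qed

lemma finite_in: assumes "finite A" shows "finite {w. (w,u)\<in>A}"
proof -
  have "{w. (w,u)\<in>A} \<subseteq> fst ` A" by force
  thus ?thesis using finite_subset finite_imageI[OF assms] by blast
qed

lemma deg_union: assumes "finite A" "finite B" "A \<inter> B = {}"
  shows "outdeg (A \<union> B) u = outdeg A u + outdeg B u" "indeg (A \<union> B) u = indeg A u + indeg B u"
proof -
  have e: "{w. (u,w)\<in>A\<union>B} = {w. (u,w)\<in>A} \<union> {w. (u,w)\<in>B}" by auto
  have d: "{w. (u,w)\<in>A} \<inter> {w. (u,w)\<in>B} = {}" using assms(3) by auto
  show "outdeg (A \<union> B) u = outdeg A u + outdeg B u"
    unfolding outdeg_def e by (rule card_Un_disjoint[OF finite_out[OF assms(1)] finite_out[OF assms(2)] d])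
next
  have e: "{w. (w,u)\<in>A\<union>B} = {w. (w,u)\<in>A} \<union> {w. (w,u)\<in>B}" by auto
  have d: "{w. (w,u)\<in>A} \<inter> {w. (w,u)\<in>B} = {}" using assms(3) by auto
  show "indeg (A \<union> B) u = indeg A u + indeg B u"
    unfolding indeg_def e by (rule card_Un_disjoint[OF finite_in[OF assms(1)] finite_in[OF assms(2)] d])
qed



lemma sg_edge: assumes "simple_graph V E" "{x,y} \<in> E"
  shows "x \<in> V \<and> y \<in> V \<and> x \<noteq> y"
proof -
  obtain a b where "a \<noteq> b" "a \<in> V" "b \<in> V" "{x,y} = {a,b}"
    using assms unfolding simple_graph_def by blast
  thus ?thesis by (auto simp: doubleton_eq_iff)
qed

lemma ori_arc: assumes "is_orientation V E D" "p \<in> D"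
  shows "fst p \<in> V \<and> snd p \<in> V \<and> {fst p, snd p} \<in> E"
  using assms unfolding is_orientation_def by auto

lemma ori_finite: assumes "is_orientation V E D" "finite V" shows "finite D"
proof -
  have "D \<subseteq> V \<times> V" using ori_arc[OF assms(1)] by force
  thus ?thesis using assms(2) finite_subset by blast
qed

lemma tourn_lemma:
  assumes ori: "is_orientation V2 E2 D2" and fin: "finite V2"
    and cl: "is_clique V2 E2 (v ` {1..k})" and inj: "inj_on v {1..k}"
    and deg: "\<forall>i\<in>{1..k}. outdeg D2 (v i) = i - 1"
  shows "i \<in> {1..k} \<Longrightarrow> {w. (v i, w) \<in> D2} = v ` {1..<i}"
proof (induction i rule: less_induct)
  case (less i)
  have sub: "v ` {1..<i} \<subseteq> {w. (v i, w) \<in> D2}"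
  proof
    fix x assume "x \<in> v ` {1..<i}"
    then obtain j where j: "j \<in> {1..<i}" "x = v j" by blast
    have jk: "j \<in> {1..k}" using j less.prems by auto
    have IH: "{w. (v j, w) \<in> D2} = v ` {1..<j}" using less.IH[of j] j jk by auto
    have "v i \<notin> v ` {1..<j}"
    proof
      assume "v i \<in> v ` {1..<j}"
      then obtain m where "m \<in> {1..<j}" "v i = v m" by blast
      moreover have "m \<in> {1..k}" using \<open>m \<in> {1..<j}\<close> jk j by auto
      ultimately have "i = m" using inj_onD[OF inj] less.prems by blast
      thus False using \<open>m \<in> {1..<j}\<close> j by simp
    qed
    hence n: "(v j, v i) \<notin> D2" using IH by blast
    have "v i \<noteq> v j"
    proof
      assume "v i = v j" hence "i = j" using inj_onD[OF inj] less.prems jk by blast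
      thus False using j by simp
    qed
    moreover have "v i \<in> v ` {1..k}" "v j \<in> v ` {1..k}" using less.prems jk by auto
    ultimately have "{v j, v i} \<in> E2" using cl unfolding is_clique_def by metis
    moreover have "\<forall>x y. {x, y} \<in> E2 \<longrightarrow> ((x, y) \<in> D2 \<longleftrightarrow> (y, x) \<notin> D2)"
      using ori unfolding is_orientation_def by (elim conjE)
    ultimately have "(v i, v j) \<in> D2" using n by metis
    thus "x \<in> {w. (v i, w) \<in> D2}" using j by simp
  qed
  have "finite {w. (v i, w) \<in> D2}"
  proof -
    have "{w. (v i, w) \<in> D2} \<subseteq> snd ` D2" by force
    thus ?thesis using ori_finite[OF ori fin] finite_subset by blast
  qed
  moreover have "card (v ` {1..<i}) = i - 1"
  proof -
    have "{1..<i} \<subseteq> {1..k}" using less.prems by auto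
    hence "inj_on v {1..<i}" using inj inj_on_subset by blast
    thus ?thesis by (simp add: card_image)
  qed
  moreover have "card {w. (v i, w) \<in> D2} = i - 1" using deg less.prems unfolding outdeg_def by blast
  ultimately show ?case using sub card_subset_eq by metis
qed



theorem lemma2p3:
  fixes k :: nat and l :: int
    and V1 V2 :: "'a set" and E1 E2 E :: "'a set set"
    and v :: "nat \<Rightarrow> 'a"
    and D1' D2 :: "('a \<times> 'a) set"
  assumes "k \<ge> 1"
    and "clique_sum k V1 E1 V2 E2 (v ` {1..k}) E"
    and "inj_on v {1..k}"
    and "AT_orientation V1 (E1 \<inter> E) D1'" and "max_outdeg_le V1 D1' l"
    and "AT_orientation V2 E2 D2" and "max_outdeg_le V2 D2 l"
    and "\<forall>i\<in>{1..k}. outdeg D2 (v i) = i - 1"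
  shows "\<exists>D. AT_orientation (V1 \<union> V2) E D \<and> max_outdeg_le (V1 \<union> V2) D l \<and>
             (\<forall>u\<in>V1. outdeg D u = outdeg D1' u)"
proof -
  define K where "K = v ` {1..k}"
  note cs = assms(2)[unfolded clique_sum_def, folded K_def]
  have sg1: "simple_graph V1 E1" and sg2: "simple_graph V2 E2" and VK: "V1 \<inter> V2 = K"
    and cl1: "is_clique V1 E1 K" and cl2: "is_clique V2 E2 K" and EE12: "E \<subseteq> E1 \<union> E2"
    and Ein: "\<forall>e \<in> E1 \<union> E2. \<not> e \<subseteq> K \<longrightarrow> e \<in> E" using cs by auto
  have fin1: "finite V1" and fin2: "finite V2" using sg1 sg2 unfolding simple_graph_def by auto
  have ori1: "is_orientation V1 (E1 \<inter> E) D1'" and ori2: "is_orientation V2 E2 D2"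
    using assms(4,6) unfolding AT_orientation_def by auto
  have fD1: "finite D1'" using ori_finite[OF ori1 fin1] .
  have fD2: "finite D2" using ori_finite[OF ori2 fin2] .
  have KV2: "K \<subseteq> V2" and KV1: "K \<subseteq> V1" using VK by auto
  have N: "\<And>i. i \<in> {1..k} \<Longrightarrow> {w. (v i, w) \<in> D2} = v ` {1..<i}"
    using tourn_lemma[OF ori2 fin2 cl2[unfolded K_def] assms(3) assms(8)] by blast
  have KK: "\<And>p. p \<in> D2 \<Longrightarrow> fst p \<in> K \<Longrightarrow> snd p \<in> K"
  proof -
    fix p assume "p \<in> D2" "fst p \<in> K"
    then obtain i where i: "i \<in> {1..k}" "fst p = v i" unfolding K_def by blast
    have "snd p \<in> {w. (v i, w) \<in> D2}" using \<open>p \<in> D2\<close> i by (cases p) auto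
    hence "snd p \<in> v ` {1..<i}" using N[OF i(1)] by simp
    thus "snd p \<in> K" using i unfolding K_def by auto
  qed
  have noK: "\<And>H p. H \<in> Eul V2 D2 \<Longrightarrow> p \<in> H \<Longrightarrow> \<not> (fst p \<in> K \<and> snd p \<in> K)"
  proof
    fix H p assume H: "H \<in> Eul V2 D2" and p: "p \<in> H" and pk: "fst p \<in> K \<and> snd p \<in> K"
    have HD: "H \<subseteq> D2" and bal: "\<forall>u\<in>V2. outdeg H u = indeg H u"
      using H unfolding Eul_def eulerian_sub_def by auto
    have fH: "finite H" using HD fD2 finite_subset by blast
    obtain j where j: "j \<in> {1..k}" "fst p = v j" using pk unfolding K_def by blast
    have "snd p \<in> v ` {1..<j}" using N[OF j(1)] p HD j(2) by (cases p) auto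
    then obtain m where m: "m \<in> {1..<j}" "snd p = v m" by blast
    define S where "S = v ` {1..m}"
    have Sk: "{1..m} \<subseteq> {1..k}" using m j by auto
    have SK: "S \<subseteq> K" unfolding S_def K_def using Sk by auto
    have clo: "\<forall>q\<in>H. fst q \<in> S \<longrightarrow> snd q \<in> S"
    proof (intro ballI impI)
      fix q assume q: "q \<in> H" "fst q \<in> S"
      then obtain a where a: "a \<in> {1..m}" "fst q = v a" unfolding S_def by blast
      have ak: "a \<in> {1..k}" using a Sk by auto
      have "snd q \<in> v ` {1..<a}" using N[OF ak] q HD a(2) by (cases q) auto
      thus "snd q \<in> S" unfolding S_def using a by auto
    qed
    have "\<forall>q\<in>H. snd q \<in> S \<longrightarrow> fst q \<in> S"
      by (rule cut_closed[OF fH _ _ clo]) (use SK KV2 bal S_def in auto)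
    moreover have "snd p \<in> S" using m unfolding S_def by auto
    ultimately have "fst p \<in> S" using p by blast
    hence "v j \<in> S" using j(2) by simp
    then obtain a where a: "a \<in> {1..m}" "v j = v a" unfolding S_def by blast
    have "j = a" using inj_onD[OF assms(3) a(2)] a Sk j by auto
    thus False using a m by auto
  qed
  define W where "W = V2 - K"
  have WV1: "W \<inter> V1 = {}" using VK unfolding W_def by auto
  define D2' where "D2' = {p \<in> D2. \<not> (fst p \<in> K \<and> snd p \<in> K)}"
  define D where "D = D1' \<union> D2'"
  have F2: "\<And>p. p \<in> D2' \<Longrightarrow> fst p \<in> W \<and> snd p \<in> V2"
  proof -
    fix p assume p: "p \<in> D2'"
    hence "p \<in> D2" unfolding D2'_def by auto
    hence "fst p \<in> V2" "snd p \<in> V2" using ori_arc[OF ori2] by auto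
    moreover have "fst p \<notin> K" using KK \<open>p \<in> D2\<close> p unfolding D2'_def by auto
    ultimately show "fst p \<in> W \<and> snd p \<in> V2" unfolding W_def by auto
  qed
  have F3: "\<And>p. p \<in> D1' \<Longrightarrow> fst p \<in> V1 \<and> snd p \<in> V1" using ori_arc[OF ori1] by auto
  have disj: "D1' \<inter> D2' = {}" using F2 F3 WV1 by blast
  have fD2': "finite D2'" using fD2 unfolding D2'_def by auto
  have fD: "finite D" unfolding D_def using fD1 fD2' by auto
  have EulD2: "\<And>H. H \<in> Eul V2 D2 \<Longrightarrow> H \<subseteq> D2'"
    using noK unfolding D2'_def Eul_def eulerian_sub_def by blast
  have EulEq: "Eul (V1 \<union> V2) D = (\<lambda>(A,B). A \<union> B) ` (Eul V1 D1' \<times> Eul V2 D2)"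
  proof
    show "(\<lambda>(A,B). A \<union> B) ` (Eul V1 D1' \<times> Eul V2 D2) \<subseteq> Eul (V1 \<union> V2) D"
    proof clarify
      fix A B assume A: "A \<in> Eul V1 D1'" and B: "B \<in> Eul V2 D2"
      have AD: "A \<subseteq> D1'" and balA: "\<forall>u\<in>V1. outdeg A u = indeg A u"
        using A unfolding Eul_def eulerian_sub_def by auto
      have balB: "\<forall>u\<in>V2. outdeg B u = indeg B u"
        using B unfolding Eul_def eulerian_sub_def by auto
      have BD': "B \<subseteq> D2'" using EulD2[OF B] .
      have fA: "finite A" using AD fD1 finite_subset by blast
      have fB: "finite B" using BD' fD2' finite_subset by blast
      have AB: "A \<inter> B = {}" using disj AD BD' by blast
      have bA: "\<And>u. outdeg A u = indeg A u"
        by (rule bal_outside[of A V1]) (use AD F3 balA in auto)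
      have bB: "\<And>u. outdeg B u = indeg B u"
        by (rule bal_outside[of B V2]) (use BD' F2 balB W_def in auto)
      show "A \<union> B \<in> Eul (V1 \<union> V2) D" unfolding Eul_def eulerian_sub_def D_def
        using AD BD' deg_union[OF fA fB AB] bA bB by auto
    qed
  next
    show "Eul (V1 \<union> V2) D \<subseteq> (\<lambda>(A,B). A \<union> B) ` (Eul V1 D1' \<times> Eul V2 D2)"
    proof
      fix H assume H: "H \<in> Eul (V1 \<union> V2) D"
      have HD: "H \<subseteq> D" and bal: "\<forall>u\<in>V1 \<union> V2. outdeg H u = indeg H u"
        using H unfolding Eul_def eulerian_sub_def by auto
      have fH: "finite H" using HD fD finite_subset by blast
      have clo: "\<forall>q\<in>H. fst q \<in> V1 \<longrightarrow> snd q \<in> V1"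
      proof (intro ballI impI)
        fix q assume q: "q \<in> H" "fst q \<in> V1"
        show "snd q \<in> V1"
        proof (cases "q \<in> D1'")
          case True thus ?thesis using F3 by blast
        next
          case False hence "q \<in> D2'" using q HD unfolding D_def by blast
          thus ?thesis using F2 WV1 q by blast
        qed
      qed
      have bck: "\<forall>q\<in>H. snd q \<in> V1 \<longrightarrow> fst q \<in> V1"
        by (rule cut_closed[OF fH fin1 _ clo]) (use bal in auto)
      define A where "A = H \<inter> D1'"
      define B where "B = H \<inter> D2'"
      have Bw: "\<forall>q\<in>B. fst q \<notin> V1 \<and> snd q \<notin> V1"
        using F2 WV1 bck unfolding B_def by blast
      have Aw: "\<forall>q\<in>A. fst q \<in> V1 \<and> snd q \<in> V1" using F3 unfolding A_def by blast
      have HAB: "H = A \<union> B" using HD unfolding A_def B_def D_def by blast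
      have "A \<in> Eul V1 D1'"
        unfolding Eul_def eulerian_sub_def
      proof (intro CollectI conjI ballI)
        show "A \<subseteq> D1'" unfolding A_def by blast
        fix u assume u: "u \<in> V1"
        have "{w. (u,w) \<in> A} = {w. (u,w) \<in> H}" using HAB Bw u by force
        moreover have "{w. (w,u) \<in> A} = {w. (w,u) \<in> H}" using HAB Bw u by force
        ultimately show "outdeg A u = indeg A u" using bal u unfolding outdeg_def indeg_def by simp
      qed
      moreover have "B \<in> Eul V2 D2"
        unfolding Eul_def eulerian_sub_def
      proof (intro CollectI conjI ballI)
        show "B \<subseteq> D2" unfolding B_def D2'_def by blast
        fix u assume u: "u \<in> V2"
        show "outdeg B u = indeg B u"
        proof (cases "u \<in> V1")
          case True
          hence "{w. (u,w) \<in> B} = {}" "{w. (w,u) \<in> B} = {}" using Bw by force+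
          thus ?thesis unfolding outdeg_def indeg_def by simp
        next
          case False
          have "{w. (u,w) \<in> B} = {w. (u,w) \<in> H}" using HAB Aw False by force
          moreover have "{w. (w,u) \<in> B} = {w. (w,u) \<in> H}" using HAB Aw False by force
          ultimately show ?thesis using bal u unfolding outdeg_def indeg_def by simp
        qed
      qed
      ultimately show "H \<in> (\<lambda>(A,B). A \<union> B) ` (Eul V1 D1' \<times> Eul V2 D2)"
        using HAB by (intro image_eqI[where x="(A,B)"]) auto
    qed
  qed
  have sub1: "\<And>A. A \<in> Eul V1 D1' \<Longrightarrow> A \<subseteq> D1'" unfolding Eul_def eulerian_sub_def by auto
  have injU: "inj_on (\<lambda>(A,B). A \<union> B) (Eul V1 D1' \<times> Eul V2 D2)"
  proof (rule inj_onI, clarify)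
    fix A B A' B' assume a: "A \<in> Eul V1 D1'" "B \<in> Eul V2 D2" "A' \<in> Eul V1 D1'" "B' \<in> Eul V2 D2"
      and e: "A \<union> B = A' \<union> B'"
    have s: "A \<subseteq> D1'" "A' \<subseteq> D1'" "B \<subseteq> D2'" "B' \<subseteq> D2'" using sub1 EulD2 a by auto
    have "A = (A \<union> B) \<inter> D1'" "A' = (A' \<union> B') \<inter> D1'" using s disj by blast+
    moreover have "B = (A \<union> B) \<inter> D2'" "B' = (A' \<union> B') \<inter> D2'" using s disj by blast+
    ultimately show "A = A' \<and> B = B'" using e by metis
  qed
  have sigeq: "sig (V1 \<union> V2) D = sig V1 D1' * sig V2 D2"
  proof -
    have "sig (V1 \<union> V2) D = (\<Sum>H\<in>(\<lambda>(A,B). A \<union> B) ` (Eul V1 D1' \<times> Eul V2 D2). (-1) ^ card H)"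
      unfolding sig_def EulEq ..
    also have "\<dots> = (\<Sum>x\<in>Eul V1 D1' \<times> Eul V2 D2. (-1) ^ card ((\<lambda>(A,B). A \<union> B) x))"
      by (rule sum.reindex[OF injU, unfolded comp_def])
    also have "\<dots> = (\<Sum>x\<in>Eul V1 D1' \<times> Eul V2 D2. (-1) ^ card (fst x) * (-1) ^ card (snd x))"
    proof (rule sum.cong[OF refl])
      fix x assume "x \<in> Eul V1 D1' \<times> Eul V2 D2"
      then obtain A B where x: "x = (A,B)" and a: "A \<in> Eul V1 D1'" "B \<in> Eul V2 D2" by blast
      have s: "A \<subseteq> D1'" "B \<subseteq> D2'" using sub1 EulD2 a by auto
      have "finite A" "finite B" using s fD1 fD2' finite_subset by auto
      moreover have "A \<inter> B = {}" using s disj by blast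
      ultimately have "card (A \<union> B) = card A + card B" by (rule card_Un_disjoint)
      thus "(-1::int) ^ card ((\<lambda>(A,B). A \<union> B) x) = (-1) ^ card (fst x) * (-1) ^ card (snd x)"
        using x by (simp add: power_add)
    qed
    also have "\<dots> = sig V1 D1' * sig V2 D2"
      unfolding sig_def sum_product sum.cartesian_product by (rule sum.cong) auto
    finally show ?thesis .
  qed
  have s1: "sig V1 D1' \<noteq> 0" using assms(4) sig_card[OF fD1] unfolding AT_orientation_def by simp
  have s2: "sig V2 D2 \<noteq> 0" using assms(6) sig_card[OF fD2] unfolding AT_orientation_def by simp
  have sigD: "sig (V1 \<union> V2) D \<noteq> 0" using sigeq s1 s2 by simp
  have arcD: "\<And>x y. (x,y) \<in> D \<Longrightarrow> x \<in> V1 \<union> V2 \<and> y \<in> V1 \<union> V2 \<and> {x, y} \<in> E"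
  proof -
      fix x y assume xy: "(x,y) \<in> D"
      show "x \<in> V1 \<union> V2 \<and> y \<in> V1 \<union> V2 \<and> {x, y} \<in> E"
      proof (cases "(x,y) \<in> D1'")
        case True thus ?thesis using ori_arc[OF ori1 True] by auto
      next
        case False
        hence d: "(x,y) \<in> D2'" using xy unfolding D_def by blast
        hence d2: "(x,y) \<in> D2" and nk: "\<not> (x \<in> K \<and> y \<in> K)" unfolding D2'_def by auto
        have "x \<in> V2" "y \<in> V2" "{x,y} \<in> E2" using ori_arc[OF ori2 d2] by auto
        moreover have "\<not> {x,y} \<subseteq> K" using nk by auto
        ultimately show ?thesis using Ein by blast
      qed
  qed
  have oriD: "is_orientation (V1 \<union> V2) E D"
    unfolding is_orientation_def
  proof (intro conjI allI impI)
    show "\<forall>(x, y)\<in>D. x \<in> V1 \<union> V2 \<and> y \<in> V1 \<union> V2 \<and> {x, y} \<in> E"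
      using arcD by blast
  next
    fix x y assume e: "{x, y} \<in> E"
    show "(x, y) \<in> D \<longleftrightarrow> (y, x) \<notin> D"
    proof (cases "x \<in> V1 \<and> y \<in> V1")
      case True
      have "{x,y} \<in> E1"
      proof (cases "{x,y} \<in> E1")
        case False
        hence e2: "{x,y} \<in> E2" using e EE12 by blast
        have "x \<in> V2" "y \<in> V2" "x \<noteq> y" using sg_edge[OF sg2 e2] by auto
        hence "x \<in> K" "y \<in> K" "x \<noteq> y" using True VK by auto
        thus ?thesis using cl1 unfolding is_clique_def by blast
      qed
      hence e1: "{x,y} \<in> E1 \<inter> E" using e by blast
      have n2: "(x,y) \<notin> D2'" "(y,x) \<notin> D2'" using F2 WV1 True by fastforce+
      have "(x, y) \<in> D1' \<longleftrightarrow> (y, x) \<notin> D1'" using ori1 e1 unfolding is_orientation_def by blast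
      thus ?thesis using n2 unfolding D_def by blast
    next
      case False
      have "{x,y} \<notin> E1" using sg_edge[OF sg1] False by blast
      hence e2: "{x,y} \<in> E2" using e EE12 by blast
      have n1: "(x,y) \<notin> D1'" "(y,x) \<notin> D1'" using F3 False by fastforce+
      have nk: "\<not> (x \<in> K \<and> y \<in> K)" using False KV1 by blast
      have "(x, y) \<in> D2 \<longleftrightarrow> (y, x) \<notin> D2" using ori2 e2 unfolding is_orientation_def by blast
      thus ?thesis using n1 nk unfolding D_def D2'_def by auto
    qed
  qed
  have od1: "\<And>u. u \<in> V1 \<Longrightarrow> outdeg D u = outdeg D1' u"
  proof -
    fix u assume u: "u \<in> V1"
    have "{w. (u,w) \<in> D} = {w. (u,w) \<in> D1'}" using F2 WV1 u unfolding D_def by fastforce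
    thus "outdeg D u = outdeg D1' u" unfolding outdeg_def by simp
  qed
  have od2: "\<And>u. u \<in> V2 \<Longrightarrow> u \<notin> V1 \<Longrightarrow> outdeg D u = outdeg D2 u"
  proof -
    fix u assume u: "u \<in> V2" "u \<notin> V1"
    have "{w. (u,w) \<in> D} = {w. (u,w) \<in> D2}" using F3 u KV1 unfolding D_def D2'_def by fastforce
    thus "outdeg D u = outdeg D2 u" unfolding outdeg_def by simp
  qed
  have "AT_orientation (V1 \<union> V2) E D"
    unfolding AT_orientation_def using oriD sigD sig_card[OF fD, of "V1 \<union> V2"] by auto
  moreover have "max_outdeg_le (V1 \<union> V2) D l"
    unfolding max_outdeg_le_def
  proof
    fix u assume "u \<in> V1 \<union> V2"
    thus "int (outdeg D u) \<le> l"
      using od1 od2 assms(5,7) unfolding max_outdeg_le_def by (cases "u \<in> V1") auto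
  qed
  ultimately show ?thesis using od1 by blast
qed

end
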